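(* Fix $a \geq 0$ and let $\mathfrak{g} = \mathfrak{r}'_{3,a}$, the three-dimensional Lie algebra with basis $\{e_1,e_2,e_3\}$ and nonzero brackets $[e_1,e_2]=ae_2-e_3$, $[e_1,e_3]=e_2+ae_3$. For every inner product $\langle\cdot,\cdot\rangle$ on $\mathfrak{g}$, there exist $\lambda \geq 1$, $k > 0$, and an orthonormal basis $\{x_1, x_2, x_3\}$ with respect to $k \langle\cdot,\cdot\rangle$ such that the bracket relations are given by \[ [x_1,x_2] = a x_2 - \lambda x_3 , \quad [x_1,x_3] = (1/\lambda) x_2 + a x_3 \] (and $[x_2,x_3]=0$). Furthermore, the matrix expression of the derivation algebra $\mathrm{Der}(\mathfrak{g})$ with respect to $\{x_1, x_2, x_3\}$ coincides with \[ \left\{ \begin{pmatrix} 0 & 0 & 0 \\ x_{21} & x_{22} & x_{23} \\ x_{31} & -\lambda^2 x_{23} & x_{22} \end{pmatrix} \;\middle|\; x_{21}, x_{22}, x_{23}, x_{31} \in \mathbb{R} \right\}. \] *)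

theory Defs
  imports "HOL-Analysis.Analysis"
begin

text \<open>The Lie algebra r'_{3,a} realised on real^3, with e_i the standard basis vectors
  (components 1,2,3). The bracket is the bilinear antisymmetric extension of
  [e1,e2] = a e2 - e3, [e1,e3] = e2 + a e3, [e2,e3] = 0.\<close>

definition e :: "3 \<Rightarrow> real^3" where
  "e i = axis i 1"

definition r3a_bracket :: "real \<Rightarrow> real^3 \<Rightarrow> real^3 \<Rightarrow> real^3" where
  "r3a_bracket a u v =
     (u$1 * v$2 - u$2 * v$1) *\<^sub>R (a *\<^sub>R e 2 - e 3)
   + (u$1 * v$3 - u$3 * v$1) *\<^sub>R (e 2 + a *\<^sub>R e 3)"

definition is_inner_product :: "(real^3 \<Rightarrow> real^3 \<Rightarrow> real) \<Rightarrow> bool" where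
  "is_inner_product ip \<longleftrightarrow> bilinear ip \<and> (\<forall>u v. ip u v = ip v u)
     \<and> (\<forall>u. u \<noteq> 0 \<longrightarrow> ip u u > 0)"

definition is_derivation :: "(real^3 \<Rightarrow> real^3 \<Rightarrow> real^3) \<Rightarrow> (real^3 \<Rightarrow> real^3) \<Rightarrow> bool" where
  "is_derivation br D \<longleftrightarrow> linear D \<and>
     (\<forall>u v. D (br u v) = br (D u) v + br u (D v))"

text \<open>Matrix M of the linear map D with respect to the basis x 1, x 2, x 3:
  D (x j) = sum_i M_{ij} x i (column j holds the coordinates of D (x j)).\<close>

definition matrix_wrt :: "(3 \<Rightarrow> real^3) \<Rightarrow> (real^3 \<Rightarrow> real^3) \<Rightarrow> real^3^3 \<Rightarrow> bool" where
  "matrix_wrt x D M \<longleftrightarrow> (\<forall>j. D (x j) = (\<Sum>i\<in>UNIV. M$i$j *\<^sub>R x i))"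

end

theory Submission
  imports Defs
begin

lemma ipS:
  assumes "is_inner_product ip"
  shows "ip (u+v) w = ip u w + ip v w" "ip u (v+w) = ip u v + ip u w"
    "ip (c *\<^sub>R u) w = c * ip u w" "ip u (c *\<^sub>R w) = c * ip u w"
    "ip (u - v) w = ip u w - ip v w" "ip u (v - w) = ip u v - ip u w"
    "ip (-u) w = - ip u w" "ip u (-w) = - ip u w" "ip 0 w = 0" "ip u 0 = 0"
  using assms unfolding is_inner_product_def
  by (auto simp: bilinear_ladd bilinear_radd bilinear_lmul bilinear_rmul bilinear_lsub
      bilinear_rsub bilinear_lneg bilinear_rneg bilinear_lzero bilinear_rzero)

lemma e_nth[simp]: "e i $ j = (if j = i then 1 else 0)"
  by (simp add: e_def axis_def)

lemma br_lin1: "linear (\<lambda>u. r3a_bracket a u v)"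
  by (rule linearI) (simp_all add: r3a_bracket_def vec_eq_iff algebra_simps)
lemma br_lin2: "linear (r3a_bracket a u)"
  by (rule linearI) (simp_all add: r3a_bracket_def vec_eq_iff algebra_simps)
lemma br_bil: "bilinear (r3a_bracket a)"
  using br_lin1 br_lin2 by (simp add: bilinear_def)
lemma br_anti: "r3a_bracket a v u = - r3a_bracket a u v"
  by (simp add: r3a_bracket_def vec_eq_iff algebra_simps)

definition Jm :: "real^3 \<Rightarrow> real^3" where "Jm v = v$3 *\<^sub>R e 2 - v$2 *\<^sub>R e 3"

lemma br_J: "u$1 = 1 \<Longrightarrow> v$1 = 0 \<Longrightarrow> r3a_bracket a u v = a *\<^sub>R v + Jm v"
  by (simp add: r3a_bracket_def Jm_def vec_eq_iff forall_3 algebra_simps)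
lemma br_0: "u$1 = 0 \<Longrightarrow> v$1 = 0 \<Longrightarrow> r3a_bracket a u v = 0"
  by (simp add: r3a_bracket_def Jm_def vec_eq_iff forall_3 algebra_simps)
lemma Jm_scale: "Jm (c *\<^sub>R v) = c *\<^sub>R Jm v"
  by (simp add: Jm_def vec_eq_iff forall_3 algebra_simps)
lemma Jm_neg: "Jm (- v) = - Jm v"
  by (simp add: Jm_def vec_eq_iff forall_3 algebra_simps)
lemma Jm_Jm: "v$1 = 0 \<Longrightarrow> Jm (Jm v) = - v"
  by (simp add: Jm_def vec_eq_iff forall_3 algebra_simps)
lemma Jm_1: "Jm v $ 1 = 0"
  by (simp add: Jm_def)
lemma Jm_nz: "v$1 = 0 \<Longrightarrow> v \<noteq> 0 \<Longrightarrow> Jm v \<noteq> 0"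
  by (auto simp: Jm_def vec_eq_iff forall_3)

lemma dim3: "dim (UNIV :: (real^3) set) = 3"
  by simp


lemma ipx:
  fixes x :: "3 \<Rightarrow> real^3" and ip :: "real^3 \<Rightarrow> real^3 \<Rightarrow> real"
  assumes orth: "\<forall>i j. k * ip (x i) (x j) = (if i = j then 1 else 0)" and k: "k > 0"
  shows "ip (x i) (x j) = (if i = j then 1/k else 0)"
proof (cases "i = j")
  case True thus ?thesis using orth[rule_format, of i j] k by (simp add: field_simps)
next
  case False thus ?thesis using orth[rule_format, of i j] k by simp
qed

lemma expand:
  fixes x :: "3 \<Rightarrow> real^3" and ip :: "real^3 \<Rightarrow> real^3 \<Rightarrow> real"
  assumes ip: "is_inner_product ip" and k: "k > 0"
    and orth: "\<forall>i j. k * ip (x i) (x j) = (if i = j then 1 else 0)"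
  shows "w = (k * ip w (x 1)) *\<^sub>R x 1 + (k * ip w (x 2)) *\<^sub>R x 2 + (k * ip w (x 3)) *\<^sub>R x 3"
proof -
  note X = ipx[OF orth k]
  note S = ipS[OF ip]
  have d: "x 1 \<noteq> x 2" "x 1 \<noteq> x 3" "x 2 \<noteq> x 3"
    using X[of 1 1] X[of 1 2] X[of 1 3] X[of 2 3] X[of 2 2] k by auto
  have ind: "independent {x 1, x 2, x 3}"
    unfolding independent_explicit
  proof (intro conjI allI impI ballI)
    fix c v assume h: "(\<Sum>v\<in>{x 1, x 2, x 3}. c v *\<^sub>R v) = 0" and v: "v \<in> {x 1, x 2, x 3}"
    have h2: "c (x 1) *\<^sub>R x 1 + c (x 2) *\<^sub>R x 2 + c (x 3) *\<^sub>R x 3 = 0"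
      using h d by (simp add: add.assoc)
    have e: "ip (c (x 1) *\<^sub>R x 1 + c (x 2) *\<^sub>R x 2 + c (x 3) *\<^sub>R x 3) (x m) = 0" for m
      using h2 S by simp
    have "c (x m) = 0" if "m = 1 \<or> m = 2 \<or> m = 3" for m
      using that k e[of 1] e[of 2] e[of 3] by (auto simp: S X)
    thus "c v = 0" using v by auto
  qed simp
  have "dim (UNIV :: (real^3) set) \<le> card {x 1, x 2, x 3}" using d by simp
  hence "UNIV \<subseteq> span {x 1, x 2, x 3}"
    using card_ge_dim_independent[OF subset_UNIV ind] by simp
  hence "w \<in> span {x 1, x 2, x 3}" by auto
  then obtain u where "w = (\<Sum>v\<in>{x 1, x 2, x 3}. u v *\<^sub>R v)"
    by (auto simp: span_finite)
  hence w: "w = u (x 1) *\<^sub>R x 1 + u (x 2) *\<^sub>R x 2 + u (x 3) *\<^sub>R x 3"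
    using d by (simp add: add.assoc)
  have "k * ip w (x m) = u (x m)" if "m = 1 \<or> m = 2 \<or> m = 3" for m
    using that k by (subst w, auto simp: S X)
  thus ?thesis using w by auto
qed

lemma vec_eq_ip:
  fixes x :: "3 \<Rightarrow> real^3" and ip :: "real^3 \<Rightarrow> real^3 \<Rightarrow> real"
  assumes ip: "is_inner_product ip" and k: "k > 0"
    and orth: "\<forall>i j. k * ip (x i) (x j) = (if i = j then 1 else 0)"
    and "ip w (x 1) = ip w' (x 1)" "ip w (x 2) = ip w' (x 2)" "ip w (x 3) = ip w' (x 3)"
  shows "w = w'"
  using expand[OF ip k orth, of w] expand[OF ip k orth, of w'] assms(4-6) by metis


lemmas BR = bilinear_ladd[OF br_bil] bilinear_radd[OF br_bil] bilinear_lmul[OF br_bil]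
  bilinear_rmul[OF br_bil] bilinear_lsub[OF br_bil] bilinear_rsub[OF br_bil]
  bilinear_lneg[OF br_bil] bilinear_rneg[OF br_bil] bilinear_lzero[OF br_bil] bilinear_rzero[OF br_bil]

lemma br_self: "r3a_bracket a u u = 0"
  by (simp add: r3a_bracket_def algebra_simps)

lemma linD:
  assumes "linear D"
  shows "D (u + v) = D u + D v" "D (c *\<^sub>R u) = c *\<^sub>R D u" "D (u - v) = D u - D v"
    "D (- u) = - D u" "D 0 = 0"
  using assms by (simp_all add: linear_add linear_scale linear_diff linear_neg linear_0)

lemma bil_f: "linear D \<Longrightarrow> bilinear (\<lambda>u v. D (r3a_bracket a u v))"
  unfolding bilinear_def by (auto intro!: linearI simp: BR linD)

lemma bil_g: "linear D \<Longrightarrow> bilinear (\<lambda>u v. r3a_bracket a (D u) v + r3a_bracket a u (D v))"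
  unfolding bilinear_def by (auto intro!: linearI simp: BR linD algebra_simps)

lemma bil_ext:
  fixes x :: "3 \<Rightarrow> real^3" and ip :: "real^3 \<Rightarrow> real^3 \<Rightarrow> real"
    and f g :: "real^3 \<Rightarrow> real^3 \<Rightarrow> real^3"
  assumes ip: "is_inner_product ip" and k: "k > 0"
    and orth: "\<forall>i j. k * ip (x i) (x j) = (if i = j then 1 else 0)"
    and f: "bilinear f" and g: "bilinear g" and fg: "\<And>i j. f (x i) (x j) = g (x i) (x j)"
  shows "f u v = g u v"
proof -
  have "f (a1 *\<^sub>R x 1 + a2 *\<^sub>R x 2 + a3 *\<^sub>R x 3) (b1 *\<^sub>R x 1 + b2 *\<^sub>R x 2 + b3 *\<^sub>R x 3)
      = g (a1 *\<^sub>R x 1 + a2 *\<^sub>R x 2 + a3 *\<^sub>R x 3) (b1 *\<^sub>R x 1 + b2 *\<^sub>R x 2 + b3 *\<^sub>R x 3)"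
    for a1 a2 a3 b1 b2 b3
    using f g by (simp add: bilinear_ladd bilinear_radd bilinear_lmul bilinear_rmul fg)
  from this[of "k * ip u (x 1)" "k * ip u (x 2)" "k * ip u (x 3)"
      "k * ip v (x 1)" "k * ip v (x 2)" "k * ip v (x 3)"]
  show ?thesis using expand[OF ip k orth, of u] expand[OF ip k orth, of v] by metis
qed

lemma ident_sym:
  assumes "linear D" "D (r3a_bracket a u v) = r3a_bracket a (D u) v + r3a_bracket a u (D v)"
  shows "D (r3a_bracket a v u) = r3a_bracket a (D v) u + r3a_bracket a v (D u)"
  using assms br_anti[of a v u] br_anti[of a u "D v"] br_anti[of a "D u" v]
  by (simp add: linD)

lemma ident_diag:
  assumes "linear D"
  shows "D (r3a_bracket a u u) = r3a_bracket a (D u) u + r3a_bracket a u (D u)"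
  using assms br_anti[of a u "D u"] by (simp add: linD br_self)


lemma deriv_sub:
  fixes x :: "3 \<Rightarrow> real^3" and ip :: "real^3 \<Rightarrow> real^3 \<Rightarrow> real"
  assumes ip: "is_inner_product ip" and k: "k > 0"
    and orth: "\<forall>i j. k * ip (x i) (x j) = (if i = j then 1 else 0)" and l: "l > 0"
    and B12: "r3a_bracket a (x 1) (x 2) = a *\<^sub>R x 2 - l *\<^sub>R x 3"
    and B13: "r3a_bracket a (x 1) (x 3) = (1 / l) *\<^sub>R x 2 + a *\<^sub>R x 3"
    and B23: "r3a_bracket a (x 2) (x 3) = 0"
    and der: "is_derivation (r3a_bracket a) D" and mw: "matrix_wrt x D M"
  shows "M$1$1 = 0 \<and> M$1$2 = 0 \<and> M$1$3 = 0 \<and> M$3$3 = M$2$2 \<and> M$3$2 = - (l^2) * M$2$3"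
proof -
  note X = ipx[OF orth k] and S = ipS[OF ip]
  have B21: "r3a_bracket a (x 2) (x 1) = - (a *\<^sub>R x 2 - l *\<^sub>R x 3)" using B12 br_anti by metis
  have B31: "r3a_bracket a (x 3) (x 1) = - ((1 / l) *\<^sub>R x 2 + a *\<^sub>R x 3)" using B13 br_anti by metis
  have B32: "r3a_bracket a (x 3) (x 2) = 0" using B23 br_anti by (metis neg_0_equal_iff_equal)
  note TB = B12 B13 B23 B21 B31 B32 br_self
  have lin: "linear D" and id: "\<And>u v. D (r3a_bracket a u v) = r3a_bracket a (D u) v + r3a_bracket a u (D v)"
    using der by (auto simp: is_derivation_def)
  have Dx: "D (x j) = M$1$j *\<^sub>R x 1 + M$2$j *\<^sub>R x 2 + M$3$j *\<^sub>R x 3" for j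
    using mw by (simp add: matrix_wrt_def sum_3)
  have E: "ip (D (r3a_bracket a (x i) (x j))) (x m) = ip (r3a_bracket a (D (x i)) (x j) + r3a_bracket a (x i) (D (x j))) (x m)" for i j m
    using id by simp
  note E121 = E[of 1 2 1, simplified TB linD[OF lin] Dx BR S X, simplified]
  note E122 = E[of 1 2 2, simplified TB linD[OF lin] Dx BR S X, simplified]
  note E123 = E[of 1 2 3, simplified TB linD[OF lin] Dx BR S X, simplified]
  note E131 = E[of 1 3 1, simplified TB linD[OF lin] Dx BR S X, simplified]
  note E132 = E[of 1 3 2, simplified TB linD[OF lin] Dx BR S X, simplified]
  note E133 = E[of 1 3 3, simplified TB linD[OF lin] Dx BR S X, simplified]
  note E231 = E[of 2 3 1, simplified TB linD[OF lin] Dx BR S X, simplified]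
  note E232 = E[of 2 3 2, simplified TB linD[OF lin] Dx BR S X, simplified]
  note E233 = E[of 2 3 3, simplified TB linD[OF lin] Dx BR S X, simplified]
  have a1: "M$1$2 = l*a*M$1$3" using E232 k l by (simp add: field_simps)
  have a2: "a*M$1$2 + l*M$1$3 = 0" using E233 k by (simp add: field_simps)
  have "(l * M$1$3) * (a^2+1) = 0" using a2 unfolding a1 by (simp add: power2_eq_square algebra_simps)
  moreover have "a^2 + 1 > (0::real)" by (simp add: add_nonneg_pos)
  ultimately have m13: "M$1$3 = 0" using l by simp
  have m12: "M$1$2 = 0" using a1 m13 by simp
  have "M$3$3 * (l*k*k) = (M$2$2 + M$1$1) * (l*k*k)" using E123 k l by (simp add: field_simps)
  hence c1: "M$3$3 = M$2$2 + M$1$1" using k l by simp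
  have "M$2$2 * (l*k*k) = (M$1$1 + M$3$3) * (l*k*k)" using E132 k l by (simp add: field_simps)
  hence c2: "M$2$2 = M$1$1 + M$3$3" using k l by simp
  have m11: "M$1$1 = 0" using c1 c2 by simp
  have m33: "M$3$3 = M$2$2" using c1 m11 by simp
  have "M$3$2 * k = (- (l^2) * M$2$3) * k" using E133 k l m11 by (simp add: field_simps power2_eq_square)
  hence m32: "M$3$2 = - (l^2) * M$2$3" using k l by (metis mult_right_cancel less_irrefl)
  show ?thesis using m11 m12 m13 m33 m32 by simp
qed


lemma deriv_sup:
  fixes x :: "3 \<Rightarrow> real^3" and ip :: "real^3 \<Rightarrow> real^3 \<Rightarrow> real"
  assumes ip: "is_inner_product ip" and k: "k > 0"
    and orth: "\<forall>i j. k * ip (x i) (x j) = (if i = j then 1 else 0)" and l: "l > 0"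
    and B12: "r3a_bracket a (x 1) (x 2) = a *\<^sub>R x 2 - l *\<^sub>R x 3"
    and B13: "r3a_bracket a (x 1) (x 3) = (1 / l) *\<^sub>R x 2 + a *\<^sub>R x 3"
    and B23: "r3a_bracket a (x 2) (x 3) = 0"
    and MM: "M = vector [vector [0, 0, 0], vector [x21::real, x22, x23], vector [x31, - (l\<^sup>2) * x23, x22]]"
  shows "\<exists>D. is_derivation (r3a_bracket a) D \<and> matrix_wrt x D M"
proof -
  note X = ipx[OF orth k] and S = ipS[OF ip]
  have B21: "r3a_bracket a (x 2) (x 1) = - (a *\<^sub>R x 2 - l *\<^sub>R x 3)" using B12 br_anti by metis
  have B31: "r3a_bracket a (x 3) (x 1) = - ((1 / l) *\<^sub>R x 2 + a *\<^sub>R x 3)" using B13 br_anti by metis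
  have B32: "r3a_bracket a (x 3) (x 2) = 0" using B23 br_anti by (metis neg_0_equal_iff_equal)
  note TB = B12 B13 B23 B21 B31 B32 br_self
  define Cf where "Cf i = (\<Sum>j\<in>UNIV. M$j$i *\<^sub>R x j)" for i
  define D where "D w = (\<Sum>i\<in>UNIV. (k * ip w (x i)) *\<^sub>R Cf i)" for w
  have Dx: "D (x i) = Cf i" for i
    using exhaust_3[of i] k by (auto simp: D_def sum_3 X)
  have mw: "matrix_wrt x D M" by (simp add: matrix_wrt_def Dx Cf_def)
  have lin: "linear D"
    by (rule linearI) (simp_all add: D_def sum_3 S algebra_simps scaleR_add_left)
  have C: "Cf 1 = x21 *\<^sub>R x 2 + x31 *\<^sub>R x 3" "Cf 2 = x22 *\<^sub>R x 2 - (l^2 * x23) *\<^sub>R x 3"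
    "Cf 3 = x23 *\<^sub>R x 2 + x22 *\<^sub>R x 3"
    by (simp_all add: Cf_def sum_3 MM)
  have P12: "D (r3a_bracket a (x 1) (x 2)) = r3a_bracket a (D (x 1)) (x 2) + r3a_bracket a (x 1) (D (x 2))"
    by (rule vec_eq_ip[OF ip k orth]) (use k l in \<open>simp_all add: TB linD[OF lin] Dx C BR S X field_simps power2_eq_square\<close>)
  have P13: "D (r3a_bracket a (x 1) (x 3)) = r3a_bracket a (D (x 1)) (x 3) + r3a_bracket a (x 1) (D (x 3))"
    by (rule vec_eq_ip[OF ip k orth]) (use k l in \<open>simp_all add: TB linD[OF lin] Dx C BR S X field_simps power2_eq_square\<close>)
  have P23: "D (r3a_bracket a (x 2) (x 3)) = r3a_bracket a (D (x 2)) (x 3) + r3a_bracket a (x 2) (D (x 3))"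
    by (rule vec_eq_ip[OF ip k orth]) (use k l in \<open>simp_all add: TB linD[OF lin] Dx C BR S X field_simps power2_eq_square\<close>)
  have P: "D (r3a_bracket a (x i) (x j)) = r3a_bracket a (D (x i)) (x j) + r3a_bracket a (x i) (D (x j))" for i j
    using exhaust_3[of i] exhaust_3[of j] P12 P13 P23 ident_sym[OF lin] ident_diag[OF lin] by metis
  have "D (r3a_bracket a u v) = r3a_bracket a (D u) v + r3a_bracket a u (D v)" for u v
    using bil_ext[OF ip k orth bil_f[OF lin] bil_g[OF lin], of a a, OF P] .
  thus ?thesis using lin mw by (auto simp: is_derivation_def)
qed


lemma construct:
  fixes ip :: "real^3 \<Rightarrow> real^3 \<Rightarrow> real"
  assumes ip: "is_inner_product ip" and v1: "v$1 = 0" and vnz: "v \<noteq> 0"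
    and ov: "ip v (Jm v) = 0" and ge: "ip v v \<le> ip (Jm v) (Jm v)"
  shows "\<exists>l k (x :: 3 \<Rightarrow> real^3). l \<ge> 1 \<and> k > 0
     \<and> (\<forall>i j. k * ip (x i) (x j) = (if i = j then 1 else 0))
     \<and> r3a_bracket a (x 1) (x 2) = a *\<^sub>R x 2 - l *\<^sub>R x 3
     \<and> r3a_bracket a (x 1) (x 3) = (1 / l) *\<^sub>R x 2 + a *\<^sub>R x 3
     \<and> r3a_bracket a (x 2) (x 3) = 0"
proof -
  note S = ipS[OF ip]
  have pos: "w \<noteq> 0 \<Longrightarrow> ip w w > 0" for w using ip by (auto simp: is_inner_product_def)
  have sym: "ip w z = ip z w" for w z using ip by (auto simp: is_inner_product_def)
  define u where "u = Jm v"
  have u1: "u$1 = 0" by (simp add: u_def Jm_1)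
  have unz: "u \<noteq> 0" using Jm_nz[OF v1 vnz] by (simp add: u_def)
  have Ju: "Jm u = - v" using Jm_Jm[OF v1] by (simp add: u_def)
  have V: "ip v v > 0" using pos[OF vnz] .
  have U: "ip u u > 0" using pos[OF unz] .
  have uv: "ip u v = 0" "ip v u = 0" using ov sym by (auto simp: u_def)
  define x1 where "x1 = e 1 - (ip (e 1) v / ip v v) *\<^sub>R v - (ip (e 1) u / ip u u) *\<^sub>R u"
  have x11: "x1$1 = 1" using v1 u1 by (simp add: x1_def)
  hence "x1 \<noteq> 0" by auto
  hence Q: "ip x1 x1 > 0" using pos by blast
  have x1v1: "ip x1 v = 0" "ip x1 u = 0"
    using V U by (simp_all add: x1_def S uv)
  have x1v: "ip x1 v = 0" "ip x1 u = 0" "ip v x1 = 0" "ip u x1 = 0"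
    using x1v1 sym[of v x1] sym[of u x1] by simp_all
  define \<sigma> where "\<sigma> = 1 / sqrt (ip x1 x1)"
  define \<alpha> where "\<alpha> = sqrt (ip v v)"
  define \<beta> where "\<beta> = sqrt (ip u u)"
  have sp: "\<sigma> > 0" "\<alpha> > 0" "\<beta> > 0" using Q U V by (simp_all add: \<sigma>_def \<alpha>_def \<beta>_def)
  have sq: "ip x1 x1 = 1 / (\<sigma> * \<sigma>)" "ip v v = \<alpha> * \<alpha>" "ip u u = \<beta> * \<beta>"
    using Q U V by (simp_all add: \<sigma>_def \<alpha>_def \<beta>_def)
  have ab: "\<alpha> \<le> \<beta>" using ge sp unfolding \<alpha>_def \<beta>_def u_def by simp
  define x2 where "x2 = (1 / (\<sigma> * \<alpha>)) *\<^sub>R v"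
  define x3 where "x3 = (- (1 / (\<sigma> * \<beta>))) *\<^sub>R u"
  define l where "l = \<beta> / \<alpha>"
  define x :: "3 \<Rightarrow> real^3" where "x i = (if i = 1 then x1 else if i = 2 then x2 else x3)" for i
  have xx: "x 1 = x1" "x 2 = x2" "x 3 = x3" by (simp_all add: x_def)
  have l1: "l \<ge> 1" using ab sp by (simp add: l_def)
  have orth: "\<forall>i j. (\<sigma>*\<sigma>) * ip (x i) (x j) = (if i = j then 1 else 0)"
    unfolding forall_3 xx using sp
    by (simp add: x2_def x3_def S sq x1v uv)
  have b12: "r3a_bracket a (x 1) (x 2) = a *\<^sub>R x 2 - l *\<^sub>R x 3"
  proof -
    have c: "(\<beta> / \<alpha>) * (1 / (\<sigma> * \<beta>)) = 1 / (\<sigma> * \<alpha>)" using sp by (simp add: field_simps)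
    have x21: "x2$1 = 0" using v1 by (simp add: x2_def)
    have "r3a_bracket a x1 x2 = a *\<^sub>R x2 + Jm x2" by (rule br_J[OF x11 x21])
    also have "Jm x2 = (1 / (\<sigma> * \<alpha>)) *\<^sub>R u" by (simp add: x2_def Jm_scale u_def)
    also have "\<dots> = - (l *\<^sub>R x3)" using sp by (simp add: x3_def l_def c)
    finally show ?thesis by (simp add: xx)
  qed
  have b13: "r3a_bracket a (x 1) (x 3) = (1 / l) *\<^sub>R x 2 + a *\<^sub>R x 3"
  proof -
    have c: "(1 / (\<beta> / \<alpha>)) * (1 / (\<sigma> * \<alpha>)) = 1 / (\<sigma> * \<beta>)" using sp by (simp add: field_simps)
    have x31: "x3$1 = 0" using u1 by (simp add: x3_def)
    have "r3a_bracket a x1 x3 = a *\<^sub>R x3 + Jm x3" by (rule br_J[OF x11 x31])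
    also have "Jm x3 = (1 / (\<sigma> * \<beta>)) *\<^sub>R v" by (simp add: x3_def Jm_scale Jm_neg Ju)
    also have "\<dots> = (1 / l) *\<^sub>R x2" using sp by (simp add: x2_def l_def c)
    finally show ?thesis by (simp add: xx add.commute)
  qed
  have b23: "r3a_bracket a (x 2) (x 3) = 0"
    using v1 u1 by (simp add: xx x2_def x3_def br_0)
  show ?thesis
    using l1 sp orth b12 b13 b23 by (intro exI[of _ l] exI[of _ "\<sigma>*\<sigma>"] exI[of _ x]) simp
qed


theorem proposition4p10:
  fixes a :: real and ip :: "real^3 \<Rightarrow> real^3 \<Rightarrow> real"
  assumes "a \<ge> 0" and "is_inner_product ip"
  shows "\<exists>l k (x :: 3 \<Rightarrow> real^3). l \<ge> 1 \<and> k > 0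
     \<and> (\<forall>i j. k * ip (x i) (x j) = (if i = j then 1 else 0))
     \<and> r3a_bracket a (x 1) (x 2) = a *\<^sub>R x 2 - l *\<^sub>R x 3
     \<and> r3a_bracket a (x 1) (x 3) = (1 / l) *\<^sub>R x 2 + a *\<^sub>R x 3
     \<and> r3a_bracket a (x 2) (x 3) = 0
     \<and> {M. \<exists>D. is_derivation (r3a_bracket a) D \<and> matrix_wrt x D M}
       = {vector [vector [0, 0, 0], vector [x21::real, x22, x23], vector [x31, - (l\<^sup>2) * x23, x22]]
           | x21 x22 x23 x31. True}"
proof -
  note ip = assms(2)
  note S = ipS[OF ip]
  have sym: "ip w z = ip z w" for w z using ip by (auto simp: is_inner_product_def)
  define p where "p = ip (e 2) (e 2)"
  define q where "q = ip (e 2) (e 3)"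
  define r where "r = ip (e 3) (e 3)"
  define g where "g t = (p - r) * t * (1 - t) + q * (2 * t - 1)" for t
  have cont: "\<forall>t. 0 \<le> t \<and> t \<le> 1 \<longrightarrow> isCont g t"
    unfolding g_def by (auto intro!: continuous_intros)
  have "\<exists>t. 0 \<le> t \<and> t \<le> 1 \<and> g t = 0"
  proof (cases "q \<ge> 0")
    case True thus ?thesis using IVT[of g 0 0 1, OF _ _ _ cont] by (simp add: g_def)
  next
    case False thus ?thesis using IVT2[of g 1 0 0, OF _ _ _ cont] by (simp add: g_def)
  qed
  then obtain t where t: "0 \<le> t" "t \<le> 1" "g t = 0" by blast
  define v where "v = (1 - t) *\<^sub>R e 2 + t *\<^sub>R e 3"
  have v1: "v$1 = 0" by (simp add: v_def)
  have vnz: "v \<noteq> 0"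
  proof
    assume "v = 0"
    hence "v$2 = 0" "v$3 = 0" by auto
    thus False by (simp add: v_def)
  qed
  have Jv: "Jm v = t *\<^sub>R e 2 - (1 - t) *\<^sub>R e 3" by (simp add: v_def Jm_def)
  have ov: "ip v (Jm v) = 0"
    using t(3) unfolding Jv by (simp add: v_def S g_def p_def q_def r_def sym[of "e 3" "e 2"] algebra_simps)
  have ex: "\<exists>l k (x :: 3 \<Rightarrow> real^3). l \<ge> 1 \<and> k > 0
     \<and> (\<forall>i j. k * ip (x i) (x j) = (if i = j then 1 else 0))
     \<and> r3a_bracket a (x 1) (x 2) = a *\<^sub>R x 2 - l *\<^sub>R x 3
     \<and> r3a_bracket a (x 1) (x 3) = (1 / l) *\<^sub>R x 2 + a *\<^sub>R x 3
     \<and> r3a_bracket a (x 2) (x 3) = 0"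
  proof (cases "ip v v \<le> ip (Jm v) (Jm v)")
    case True thus ?thesis by (rule construct[OF ip v1 vnz ov])
  next
    case False
    have w1: "Jm v $ 1 = 0" by (rule Jm_1)
    have wnz: "Jm v \<noteq> 0" by (rule Jm_nz[OF v1 vnz])
    have ow: "ip (Jm v) (Jm (Jm v)) = 0" using ov sym[of v "Jm v"] by (simp add: Jm_Jm[OF v1] S)
    have gw: "ip (Jm v) (Jm v) \<le> ip (Jm (Jm v)) (Jm (Jm v))" using False by (simp add: Jm_Jm[OF v1] S)
    show ?thesis by (rule construct[OF ip w1 wnz ow gw])
  qed
  then obtain l k and x :: "3 \<Rightarrow> real^3" where l: "l \<ge> 1" and k: "k > 0"
    and orth: "\<forall>i j. k * ip (x i) (x j) = (if i = j then 1 else 0)"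
    and B12: "r3a_bracket a (x 1) (x 2) = a *\<^sub>R x 2 - l *\<^sub>R x 3"
    and B13: "r3a_bracket a (x 1) (x 3) = (1 / l) *\<^sub>R x 2 + a *\<^sub>R x 3"
    and B23: "r3a_bracket a (x 2) (x 3) = 0" by blast
  have l0: "l > 0" using l by simp
  have "{M. \<exists>D. is_derivation (r3a_bracket a) D \<and> matrix_wrt x D M}
       = {vector [vector [0, 0, 0], vector [x21::real, x22, x23], vector [x31, - (l\<^sup>2) * x23, x22]]
           | x21 x22 x23 x31. True}" (is "?L = ?R")
  proof (rule set_eqI, rule iffI)
    fix M assume "M \<in> ?L"
    then obtain D where der: "is_derivation (r3a_bracket a) D" and mw: "matrix_wrt x D M" by blast
    have c: "M$1$1 = 0 \<and> M$1$2 = 0 \<and> M$1$3 = 0 \<and> M$3$3 = M$2$2 \<and> M$3$2 = - (l^2) * M$2$3"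
      by (rule deriv_sub[OF ip k orth l0 B12 B13 B23 der mw])
    have "M = vector [vector [0, 0, 0], vector [M$2$1, M$2$2, M$2$3], vector [M$3$1, - (l\<^sup>2) * M$2$3, M$2$2]]"
      using c by (simp add: vec_eq_iff forall_3)
    thus "M \<in> ?R" by blast
  next
    fix M assume "M \<in> ?R"
    then obtain x21 x22 x23 x31 where MM: "M = vector [vector [0, 0, 0], vector [x21::real, x22, x23], vector [x31, - (l\<^sup>2) * x23, x22]]"
      by blast
    show "M \<in> ?L" using deriv_sup[OF ip k orth l0 B12 B13 B23 MM] by blast
  qed
  thus ?thesis using l k orth B12 B13 B23 by blast
qed

end
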